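(* For every $U>0$, $\mu\in\mathbb{R}$, $T\ge0$, the functional $\mathcal{F}$ is bounded from below on $\mathcal{D}$.
   Context: Let $\mathbb{T}^3=[-\pi,\pi]^3$ with periodic identification and normalized Haar measure $dp$. Let $\varepsilon(p)=4\sum_{k=1}^3\sin^2(p_k/2)$. $\mathcal{D}=\{(\gamma,\alpha,\rho_0): \gamma\in L^1(\mathbb{T}^3),\ \gamma\ge0,\ \alpha^2\le\gamma(1+\gamma)\text{ a.e.},\ \rho_0\ge0\}$. With $\beta=\sqrt{(\tfrac12+\gamma)^2-\alpha^2}$, $S(\gamma,\alpha)=\int\big[(\beta+\tfrac12)\ln(\beta+\tfrac12)-(\beta-\tfrac12)\ln(\beta-\tfrac12)\big]dp$, and $\mathcal{F}(\gamma,\alpha,\rho_0)=\int(\varepsilon-\mu)\gamma\,dp-\mu\rho_0-TS(\gamma,\alpha)+\frac U2(\int\alpha)^2+U(\int\gamma)^2+U\rho_0\int\alpha+2U\rho_0\int\gamma+\frac U2\rho_0^2$ (integrals over $\mathbb{T}^3$). *)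

theory Defs
  imports "HOL-Analysis.Analysis"
begin

text \<open>The torus T^3 = [-pi,pi]^3 (periodic identification; the boundary is a null set)
 with normalized Haar measure (2 pi)^(-3) times Lebesgue measure.\<close>
definition torus :: "(real ^ 3) measure" where
  "torus = scale_measure (ennreal (1 / (2 * pi) ^ 3))
            (restrict_space lborel (cbox (\<chi> k. - pi) (\<chi> k. pi)))"

definition disp :: "real ^ 3 \<Rightarrow> real" where
  "disp p = 4 * (\<Sum>k\<in>UNIV. (sin (p $ k / 2))\<^sup>2)"

definition domD :: "((real ^ 3 \<Rightarrow> real) \<times> (real ^ 3 \<Rightarrow> real) \<times> real) set" where
  "domD = {(\<gamma>, \<alpha>, \<rho>0). integrable torus \<gamma> \<and> \<alpha> \<in> borel_measurable torus \<and>
              (AE p in torus. \<gamma> p \<ge> 0) \<and>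
              (AE p in torus. (\<alpha> p)\<^sup>2 \<le> \<gamma> p * (1 + \<gamma> p)) \<and> \<rho>0 \<ge> 0}"

definition betaf :: "(real ^ 3 \<Rightarrow> real) \<Rightarrow> (real ^ 3 \<Rightarrow> real) \<Rightarrow> real ^ 3 \<Rightarrow> real" where
  "betaf \<gamma> \<alpha> p = sqrt ((1/2 + \<gamma> p)\<^sup>2 - (\<alpha> p)\<^sup>2)"

definition entropy :: "(real ^ 3 \<Rightarrow> real) \<Rightarrow> (real ^ 3 \<Rightarrow> real) \<Rightarrow> real" where
  "entropy \<gamma> \<alpha> = (\<integral>p. (let b = betaf \<gamma> \<alpha> p in
       (b + 1/2) * ln (b + 1/2) - (b - 1/2) * ln (b - 1/2)) \<partial>torus)"

definition freeF :: "real \<Rightarrow> real \<Rightarrow> real \<Rightarrow>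
    (real ^ 3 \<Rightarrow> real) \<Rightarrow> (real ^ 3 \<Rightarrow> real) \<Rightarrow> real \<Rightarrow> real" where
  "freeF U \<mu> T \<gamma> \<alpha> \<rho>0 =
     (\<integral>p. (disp p - \<mu>) * \<gamma> p \<partial>torus) - \<mu> * \<rho>0 - T * entropy \<gamma> \<alpha>
     + U / 2 * (\<integral>p. \<alpha> p \<partial>torus)\<^sup>2 + U * (\<integral>p. \<gamma> p \<partial>torus)\<^sup>2
     + U * \<rho>0 * (\<integral>p. \<alpha> p \<partial>torus) + 2 * U * \<rho>0 * (\<integral>p. \<gamma> p \<partial>torus)
     + U / 2 * \<rho>0\<^sup>2"

end

theory Submission
  imports Defs
begin

lemma s_bound:
  fixes b :: real
  assumes "b \<ge> 1/2"
  shows "(b + 1/2) * ln (b + 1/2) - (b - 1/2) * ln (b - 1/2) \<le> b + 1/2"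
proof (cases "b = 1/2")
  case True then show ?thesis by (simp add: True)
next
  case False
  define x where "x = b - 1/2"
  have x: "x > 0" using assms False x_def by auto
  have bx: "b + 1/2 = x + 1" "b - 1/2 = x" using x_def by auto
  have l1: "ln (x + 1) \<le> x" using x ln_le_minus_one[of "x+1"] by simp
  have "ln ((x+1)/x) \<le> (x+1)/x - 1" using x ln_le_minus_one[of "(x+1)/x"] by simp
  also have "\<dots> = 1/x" using x by (simp add: field_simps)
  finally have "ln (x+1) - ln x \<le> 1/x" using x by (simp add: ln_div)
  hence l2: "x * (ln (x+1) - ln x) \<le> 1" using x
    by (metis divide_self_if less_irrefl mult_left_mono order_less_imp_le times_divide_eq_right mult_1_right)
  have "(x + 1) * ln (x + 1) - x * ln x = ln (x+1) + x * (ln (x+1) - ln x)"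
    by (simp add: algebra_simps)
  also have "\<dots> \<le> x + 1" using l1 l2 by linarith
  finally show ?thesis unfolding bx by simp
qed

lemma torus_finite: "finite_measure torus"
proof
  have "emeasure torus (space torus)
     = ennreal (1 / (2 * pi) ^ 3) * emeasure (restrict_space lborel (cbox (\<chi> k. - pi) (\<chi> k. pi) :: (real^3) set)) (space (restrict_space lborel (cbox (\<chi> k. - pi) (\<chi> k. pi) :: (real^3) set)))"
    unfolding torus_def by (simp add: emeasure_scale_measure space_scale_measure)
  also have "\<dots> = ennreal (1 / (2 * pi) ^ 3) * emeasure lborel (cbox (\<chi> k. - pi) (\<chi> k. pi) :: (real^3) set)"
    by (simp add: emeasure_restrict_space space_restrict_space)
  also have "\<dots> < \<infinity>"
    using emeasure_lborel_cbox_finite[of "(\<chi> k. - pi)::real^3" "\<chi> k. pi"] by (simp add: ennreal_mult_less_top)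
  finally show "emeasure torus (space torus) \<noteq> \<infinity>" by simp
qed

theorem proposition3p1:
  fixes U \<mu> T :: real
  assumes "U > 0" and "T \<ge> 0"
  shows "\<exists>C. \<forall>(\<gamma>, \<alpha>, \<rho>0) \<in> domD. freeF U \<mu> T \<gamma> \<alpha> \<rho>0 \<ge> C"
proof -
  interpret finite_measure torus by (rule torus_finite)
  define K where "K = measure torus (space torus)"
  have K0: "K \<ge> 0" unfolding K_def by simp
  define b1 where "b1 = \<bar>\<mu>\<bar> + T"
  define b2 where "b2 = \<bar>\<mu>\<bar> + U * K / 2"
  define C where "C = - b1\<^sup>2 / (4 * U) - b2\<^sup>2 / (2 * U) - T * K"
  have main: "freeF U \<mu> T \<gamma> \<alpha> \<rho>0 \<ge> C" if mem: "(\<gamma>, \<alpha>, \<rho>0) \<in> domD" for \<gamma> \<alpha> \<rho>0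
  proof -
    have gi: "integrable torus \<gamma>" and am: "\<alpha> \<in> borel_measurable torus"
      and gpos: "AE p in torus. \<gamma> p \<ge> 0"
      and ag: "AE p in torus. (\<alpha> p)\<^sup>2 \<le> \<gamma> p * (1 + \<gamma> p)" and r0: "\<rho>0 \<ge> 0"
      using mem unfolding domD_def by auto
    define G where "G = (\<integral>p. \<gamma> p \<partial>torus)"
    define A where "A = (\<integral>p. \<alpha> p \<partial>torus)"
    define D where "D = (\<integral>p. (disp p - \<mu>) * \<gamma> p \<partial>torus)"
    define E where "E = entropy \<gamma> \<alpha>"
    have G0: "G \<ge> 0" unfolding G_def using gpos by (simp add: integral_nonneg_AE)
    have cint: "integrable torus (\<lambda>p. c)" for c :: real by simp
    have gci: "integrable torus (\<lambda>p. \<gamma> p + c)" for c :: real using gi by simp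
    have intc: "(\<integral>p. \<gamma> p + c \<partial>torus) = G + c * K" for c :: real
      unfolding G_def K_def using gi by (simp add: Bochner_Integration.integral_add)
    have abnd: "AE p in torus. \<bar>\<alpha> p\<bar> \<le> \<gamma> p + 1/2"
      using gpos ag
    proof eventually_elim
      case (elim p)
      have "(\<alpha> p)\<^sup>2 \<le> (\<gamma> p + 1/2)\<^sup>2" using elim by (simp add: power2_eq_square algebra_simps)
      hence "\<bar>\<alpha> p\<bar> \<le> \<bar>\<gamma> p + 1/2\<bar>" by (simp add: abs_le_square_iff)
      thus ?case using elim by simp
    qed
    have ai: "integrable torus \<alpha>"
      by (rule Bochner_Integration.integrable_bound[OF gci[of "1/2"] am]) (use abnd in auto)
    have Ab: "\<bar>A\<bar> \<le> G + K/2"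
    proof -
      have "\<bar>A\<bar> \<le> (\<integral>p. \<bar>\<alpha> p\<bar> \<partial>torus)" unfolding A_def
        using integral_norm_bound[of torus \<alpha>] by simp
      also have "\<dots> \<le> (\<integral>p. \<gamma> p + 1/2 \<partial>torus)"
        by (rule integral_mono_AE) (use ai gci abnd in auto)
      finally show ?thesis using intc[of "1/2"] by simp
    qed
    have Db: "D \<ge> - \<bar>\<mu>\<bar> * G"
    proof (cases "integrable torus (\<lambda>p. (disp p - \<mu>) * \<gamma> p)")
      case True
      have dpos: "disp p \<ge> 0" for p unfolding disp_def by (simp add: sum_nonneg)
      have "(\<integral>p. - \<bar>\<mu>\<bar> * \<gamma> p \<partial>torus) \<le> D" unfolding D_def
      proof (rule integral_mono_AE)
        show "integrable torus (\<lambda>p. - \<bar>\<mu>\<bar> * \<gamma> p)" using gi by simp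
        show "integrable torus (\<lambda>p. (disp p - \<mu>) * \<gamma> p)" by (rule True)
        show "AE p in torus. - \<bar>\<mu>\<bar> * \<gamma> p \<le> (disp p - \<mu>) * \<gamma> p"
          using gpos
        proof eventually_elim
          case (elim p)
          have "0 \<le> disp p * \<gamma> p" using dpos elim by simp
          moreover have "- \<bar>\<mu>\<bar> * \<gamma> p \<le> - \<mu> * \<gamma> p" using elim
            by (simp add: mult_right_mono)
          ultimately show ?case by (simp add: algebra_simps)
        qed
      qed
      thus ?thesis unfolding G_def by simp
    next
      case False
      hence "D = 0" unfolding D_def by (simp add: not_integrable_integral_eq)
      thus ?thesis using G0 by simp
    qed
    have Eb: "E \<le> G + K"
    proof -
      let ?f = "\<lambda>p. (let b = betaf \<gamma> \<alpha> p in
         (b + 1/2) * ln (b + 1/2) - (b - 1/2) * ln (b - 1/2))"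
      show ?thesis
      proof (cases "integrable torus ?f")
        case True
        have "E \<le> (\<integral>p. \<gamma> p + 1 \<partial>torus)" unfolding E_def entropy_def
        proof (rule integral_mono_AE)
          show "integrable torus ?f" by (rule True)
          show "integrable torus (\<lambda>p. \<gamma> p + 1)" by (rule gci)
          show "AE p in torus. ?f p \<le> \<gamma> p + 1"
            using gpos ag
          proof eventually_elim
            case (elim p)
            define b where "b = betaf \<gamma> \<alpha> p"
            have q1: "(1/2 + \<gamma> p)\<^sup>2 - (\<alpha> p)\<^sup>2 \<ge> 1/4"
              using elim by (simp add: power2_eq_square algebra_simps)
            have "sqrt (1/4) \<le> b" unfolding b_def betaf_def using q1 by simp
            hence bl: "b \<ge> 1/2" by (simp add: real_sqrt_divide)
            have "(1/2 + \<gamma> p)\<^sup>2 - (\<alpha> p)\<^sup>2 \<le> (1/2 + \<gamma> p)\<^sup>2" by simp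
            hence "b \<le> sqrt ((1/2 + \<gamma> p)\<^sup>2)" unfolding b_def betaf_def
              using real_sqrt_le_mono by blast
            hence bu: "b \<le> 1/2 + \<gamma> p" using elim by simp
            have "?f p = (b + 1/2) * ln (b + 1/2) - (b - 1/2) * ln (b - 1/2)"
              unfolding b_def by (simp add: Let_def)
            also have "\<dots> \<le> b + 1/2" by (rule s_bound[OF bl])
            finally show ?case using bu by simp
          qed
        qed
        thus ?thesis using intc[of 1] by simp
      next
        case False
        hence "E = 0" unfolding E_def entropy_def by (simp add: not_integrable_integral_eq)
        thus ?thesis using G0 K0 by simp
      qed
    qed
    have F: "freeF U \<mu> T \<gamma> \<alpha> \<rho>0 = D - \<mu> * \<rho>0 - T * E + U/2 * A\<^sup>2 + U * G\<^sup>2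
        + U * \<rho>0 * A + 2 * U * \<rho>0 * G + U/2 * \<rho>0\<^sup>2"
      unfolding freeF_def D_def E_def A_def G_def by simp
    have t1: "U/2 * A\<^sup>2 \<ge> 0" using assms by simp
    have t2: "U * \<rho>0 * A \<ge> - (U * \<rho>0) * (G + K/2)"
    proof -
      have "- A \<le> G + K/2" using Ab by linarith
      hence "(U * \<rho>0) * (- A) \<le> (U * \<rho>0) * (G + K/2)"
        using assms r0 by (intro mult_left_mono) auto
      thus ?thesis by simp
    qed
    have t3: "- T * E \<ge> - T * (G + K)" using Eb assms by (simp add: mult_left_mono)
    have t4: "- \<mu> * \<rho>0 \<ge> - \<bar>\<mu>\<bar> * \<rho>0" using r0 by (simp add: mult_right_mono)
    have t5: "U * \<rho>0 * G \<ge> 0" using assms r0 G0 by simp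
    have q1: "U * G\<^sup>2 - b1 * G \<ge> - b1\<^sup>2 / (4 * U)"
    proof -
      have "0 \<le> (2 * U * G - b1)\<^sup>2" by simp
      hence "0 \<le> 4 * U * (U * G\<^sup>2 - b1 * G) + b1\<^sup>2" by (simp add: power2_eq_square algebra_simps)
      thus ?thesis using assms by (simp add: field_simps)
    qed
    have q2: "U/2 * \<rho>0\<^sup>2 - b2 * \<rho>0 \<ge> - b2\<^sup>2 / (2 * U)"
    proof -
      have "0 \<le> (U * \<rho>0 - b2)\<^sup>2" by simp
      hence "0 \<le> 2 * U * (U/2 * \<rho>0\<^sup>2 - b2 * \<rho>0) + b2\<^sup>2" by (simp add: power2_eq_square algebra_simps)
      thus ?thesis using assms by (simp add: field_simps)
    qed
    have "freeF U \<mu> T \<gamma> \<alpha> \<rho>0 \<ge> (U * G\<^sup>2 - b1 * G) + (U/2 * \<rho>0\<^sup>2 - b2 * \<rho>0) - T * K"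
      unfolding F b1_def b2_def using Db t1 t2 t3 t4 t5 by (simp add: algebra_simps)
    thus ?thesis unfolding C_def using q1 q2 by linarith
  qed
  show ?thesis using main by blast
qed

end
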